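(* Consider, on a uniform one-dimensional grid $x_i=x_0+ih$, the semi-discrete scheme for $\partial_t u+\partial_x f(u)=s(x,t)$ (with $f$ a smooth nonlinear function and $s$ smooth) $$\Big(\frac{du}{dt}\Big)_i+\frac{1}{24}\Big[\Big(\frac{du}{dt}\Big)_{i+1}-2\Big(\frac{du}{dt}\Big)_i+\Big(\frac{du}{dt}\Big)_{i-1}\Big]+\frac{\phi_{i+1/2}-\phi_{i-1/2}}{h}=s(x_i)+\frac{1}{24}\big[s(x_{i+1})-2s(x_i)+s(x_{i-1})\big],$$ where $\phi_{i+1/2}=\tfrac12[f(u_L)+f(u_R)]-\tfrac12\,|f'(\bar u_{i+1/2})|\,(u_R-u_L)$ with $\bar u_{i+1/2}$ an intermediate state at the face $x_{i+1/2}$, and $u_L,u_R$ are given by the reconstruction with $\kappa=1/2$: $$u_L=u_i+\tfrac14\big[(1-\kappa)(u_i-u_{i-1})+(1+\kappa)(u_{i+1}-u_i)\big],\quad u_R=u_{i+1}-\tfrac14\big[(1-\kappa)(u_{i+1}-u_i)+(1+\kappa)(u_i-u_{i-1})\big].$$ (The source/time-derivative treatment is equivalently $s_i=s(x_i)+\tfrac{\kappa_s}{4}[s(x_{i+1})-2s(x_i)+s(x_{i-1})]$ with $\kappa_s=1/6$.) Then, for a smooth exact solution $u$ of $\partial_tu+\partial_xf(u)=s$ substituted pointwise ($u_i=u(x_i,t)$), the second-order truncation error is factored as $-\tfrac{1}{24}(u_t+f_x-s)_{xx}h^2$ and hence vanishes, so the truncation error of the scheme is $O(h^3)$, for general nonlinear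 $f$.
   Context: This is the one-dimensional U-MUSCL scheme with point-valued solutions and the special source (and time-derivative) discretization called U-MUSCL-SSQ. The truncation error is the residual (left side minus right side) evaluated with the exact solution's point values. *)

theory Defs
  imports "HOL-Analysis.Analysis" "HOL-Library.Landau_Symbols"
begin

definition smooth_fun :: "(real \<Rightarrow> real) \<Rightarrow> bool" where
  "smooth_fun g \<longleftrightarrow> (\<forall>n x. ((deriv ^^ n) g) differentiable (at x))"

text \<open>U-MUSCL reconstruction at the face j+1/2 (between grid points j and j+1),
  for point values U indexed by integers.\<close>
definition muscl_uL :: "real \<Rightarrow> (int \<Rightarrow> real) \<Rightarrow> int \<Rightarrow> real" where
  "muscl_uL \<kappa> U j = U j + 1/4 * ((1 - \<kappa>) * (U j - U (j - 1)) + (1 + \<kappa>) * (U (j + 1) - U j))"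

definition muscl_uR :: "real \<Rightarrow> (int \<Rightarrow> real) \<Rightarrow> int \<Rightarrow> real" where
  "muscl_uR \<kappa> U j = U (j + 1) - 1/4 * ((1 - \<kappa>) * (U (j + 2) - U (j + 1)) + (1 + \<kappa>) * (U (j + 1) - U j))"

text \<open>Upwind (Rusanov-type) numerical flux at face j+1/2; the intermediate state
  is given by the averaging function m applied to (uL, uR).\<close>
definition num_flux :: "(real \<Rightarrow> real) \<Rightarrow> (real \<Rightarrow> real \<Rightarrow> real) \<Rightarrow> real \<Rightarrow> (int \<Rightarrow> real) \<Rightarrow> int \<Rightarrow> real" where
  "num_flux f m \<kappa> U j =
     (let a = muscl_uL \<kappa> U j; b = muscl_uR \<kappa> U j
      in (f a + f b) / 2 - 1/2 * \<bar>deriv f (m a b)\<bar> * (b - a))"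

definition trunc_err ::
  "(real \<Rightarrow> real) \<Rightarrow> (real \<Rightarrow> real \<Rightarrow> real) \<Rightarrow> real \<Rightarrow>
   (real \<Rightarrow> real \<Rightarrow> real) \<Rightarrow> (real \<Rightarrow> real \<Rightarrow> real) \<Rightarrow> real \<Rightarrow> real \<Rightarrow> real \<Rightarrow> real" where
  "trunc_err f m \<kappa> u s h x t =
     (let U = (\<lambda>k::int. u (x + of_int k * h) t);
          V = (\<lambda>k::int. deriv (\<lambda>\<tau>. u (x + of_int k * h) \<tau>) t);
          S = (\<lambda>k::int. s (x + of_int k * h) t)
      in V 0 + (V 1 - 2 * V 0 + V (-1)) / 24
         + (num_flux f m \<kappa> U 0 - num_flux f m \<kappa> U (-1)) / h
         - (S 0 + (S 1 - 2 * S 0 + S (-1)) / 24))"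

end

theory Submission
  imports Defs
begin

lemma cont_bound:
  fixes h :: "real \<Rightarrow> real"
  assumes "continuous_on {a..b} h"
  shows "\<exists>B\<ge>0. \<forall>t\<in>{a..b}. \<bar>h t\<bar> \<le> B"
proof -
  have "bounded (h ` {a..b})" by (rule compact_imp_bounded[OF compact_continuous_image[OF assms compact_Icc]])
  then obtain B where "\<forall>y\<in>h ` {a..b}. \<bar>y\<bar> \<le> B" by (auto simp: bounded_real)
  then show ?thesis by (intro exI[of _ "max B 0"]) auto
qed

lemma taylor_unif:
  fixes d :: "nat \<Rightarrow> real \<Rightarrow> real"
  assumes n: "0 < n" and D: "\<And>m y. m < n \<Longrightarrow> (d m has_real_derivative d (Suc m) y) (at y)"
    and C: "continuous_on {a..b} (d n)"
  shows "\<exists>C\<ge>0. \<forall>c y. c \<in> {a..b} \<longrightarrow> c + y \<in> {a..b} \<longrightarrow>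
     \<bar>d 0 (c+y) - (\<Sum>m<n. d m c / fact m * y^m)\<bar> \<le> C * \<bar>y\<bar>^n"
proof -
  obtain B where B0: "B \<ge> 0" and B: "\<forall>t\<in>{a..b}. \<bar>d n t\<bar> \<le> B" using cont_bound[OF C] by blast
  show ?thesis
  proof (intro exI[of _ "B / fact n"] conjI allI impI)
    show "0 \<le> B / fact n" using B0 by simp
    fix c y assume c: "c \<in> {a..b}" and cy: "c + y \<in> {a..b}"
    show "\<bar>d 0 (c+y) - (\<Sum>m<n. d m c / fact m * y^m)\<bar> \<le> B / fact n * \<bar>y\<bar>^n"
    proof (cases "y = 0")
      case True
      have "(\<Sum>m<n. d m c / fact m * y^m) = (\<Sum>m<n. if m = 0 then d 0 c else 0)"
        using True by (intro sum.cong) auto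
      also have "\<dots> = d 0 c" using n by (simp add: sum.delta)
      finally show ?thesis using True n B0 by (simp add: zero_power)
    next
      case False
      obtain t where t: "(if c + y < c then c + y < t \<and> t < c else c < t \<and> t < c + y)"
        and eq: "d 0 (c+y) = (\<Sum>m<n. (d m c / fact m) * (c + y - c)^m) + (d n t / fact n) * (c + y - c)^n"
        using Taylor[of n d "d 0" a b c "c+y"] n D c cy False by auto
      have "t \<in> {a..b}" using t c cy by (auto split: if_splits)
      then have "\<bar>d n t\<bar> \<le> B" using B by auto
      then have "\<bar>d n t / fact n * y^n\<bar> \<le> B / fact n * \<bar>y\<bar>^n"
        by (simp add: abs_mult power_abs divide_right_mono mult_right_mono)
      then show ?thesis using eq by simp
    qed
  qed
qed

lemma smooth_D:
  assumes "smooth_fun g"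
  shows "((deriv ^^ m) g has_real_derivative (deriv ^^ Suc m) g y) (at y)"
  using assms unfolding smooth_fun_def by (simp add: DERIV_deriv_iff_real_differentiable)

lemma smooth_C:
  assumes "smooth_fun g"
  shows "continuous_on A ((deriv ^^ m) g)"
  using assms unfolding smooth_fun_def
  by (meson continuous_at_imp_continuous_on differentiable_imp_continuous_within)

lemma smooth_taylor:
  assumes "smooth_fun g" "0 < n"
  shows "\<exists>C\<ge>0. \<forall>c y. c \<in> {a..b} \<longrightarrow> c + y \<in> {a..b} \<longrightarrow>
     \<bar>g (c+y) - (\<Sum>m<n. (deriv ^^ m) g c / fact m * y^m)\<bar> \<le> C * \<bar>y\<bar>^n"
  using taylor_unif[of n "\<lambda>m. (deriv ^^ m) g" a b] assms smooth_D smooth_C by auto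

lemma stencil:
  fixes w :: "real \<Rightarrow> real"
  assumes T: "\<And>k. \<bar>k\<bar> \<le> 2 \<Longrightarrow> \<bar>w k - (w 0 + g1*(k*h) + g2/2*(k*h)^2 + g3/6*(k*h)^3)\<bar> \<le> C*\<bar>k*h\<bar>^4"
    and h: "0 < h" and C: "0 \<le> C"
  defines "U \<equiv> (\<lambda>k::int. w (of_int k))"
  shows "\<bar>muscl_uL (1/2) U 0 + muscl_uR (1/2) U 0 - 2 * w (1/2)\<bar> \<le> 4*C*h^4"
    and "\<bar>muscl_uL (1/2) U (-1) + muscl_uR (1/2) U (-1) - 2 * w (-1/2)\<bar> \<le> 4*C*h^4"
    and "\<bar>muscl_uL (1/2) U 0 - w (1/2)\<bar> \<le> \<bar>g3\<bar>*h^3/16 + 3*C*h^4"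
    and "\<bar>muscl_uR (1/2) U 0 - w (1/2)\<bar> \<le> \<bar>g3\<bar>*h^3/16 + 3*C*h^4"
    and "\<bar>muscl_uL (1/2) U (-1) - w (-1/2)\<bar> \<le> \<bar>g3\<bar>*h^3/16 + 3*C*h^4"
    and "\<bar>muscl_uR (1/2) U (-1) - w (-1/2)\<bar> \<le> \<bar>g3\<bar>*h^3/16 + 3*C*h^4"
    and "\<bar>(muscl_uR (1/2) U 0 - muscl_uL (1/2) U 0) - (muscl_uR (1/2) U (-1) - muscl_uL (1/2) U (-1))\<bar> \<le> 8*C*h^4"
    and "\<bar>muscl_uR (1/2) U (-1) - muscl_uL (1/2) U (-1)\<bar> \<le> \<bar>g3\<bar>*h^3/8 + 3*C*h^4"
proof -
  define r where "r k = w k - (w 0 + g1*(k*h) + g2/2*(k*h)^2 + g3/6*(k*h)^3)" for k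
  have wr: "w k = w 0 + g1*(k*h) + g2/2*(k*h)^2 + g3/6*(k*h)^3 + r k" for k by (simp add: r_def)
  define H where "H = C*h^4"
  have rb: "\<bar>r k\<bar> \<le> \<bar>k\<bar>^4 * H" if "\<bar>k\<bar> \<le> 2" for k
    using T[OF that] h by (simp add: r_def H_def abs_mult power_mult_distrib mult_ac)
  have H0: "0 \<le> H" using C h by (simp add: H_def)
  have r0: "r 0 = 0" using rb[of 0] by simp
  have r1: "\<bar>r 1\<bar> \<le> H" "\<bar>r (-1)\<bar> \<le> H" using rb[of 1] rb[of "-1"] by auto
  have r2: "\<bar>r 2\<bar> \<le> 16*H" "\<bar>r (-2)\<bar> \<le> 16*H" using rb[of 2] rb[of "-2"] by auto
  have r3: "\<bar>r (1/2)\<bar> \<le> H/16" "\<bar>r (-1/2)\<bar> \<le> H/16" using rb[of "1/2"] rb[of "-1/2"] by (auto simp: power_divide)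
  have U: "U 0 = w 0" "U 1 = w 1" "U (-1) = w (-1)" "U 2 = w 2" "U (-2) = w (-2)"
    by (simp_all add: U_def)
  have L0: "muscl_uL (1/2) U 0 = w 0 + 1/8*(w 0 - w (-1)) + 3/8*(w 1 - w 0)"
    by (simp add: muscl_uL_def U) (simp add: field_simps)
  have R0: "muscl_uR (1/2) U 0 = w 1 - 1/8*(w 2 - w 1) - 3/8*(w 1 - w 0)"
    by (simp add: muscl_uR_def U) (simp add: field_simps)
  have L1: "muscl_uL (1/2) U (-1) = w (-1) + 1/8*(w (-1) - w (-2)) + 3/8*(w 0 - w (-1))"
    by (simp add: muscl_uL_def U) (simp add: field_simps)
  have R1: "muscl_uR (1/2) U (-1) = w 0 - 1/8*(w 1 - w 0) - 3/8*(w 0 - w (-1))"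
    by (simp add: muscl_uR_def U) (simp add: field_simps)
  define G where "G = \<bar>g3\<bar>*h^3"
  have Ga: "\<bar>g3*h^3\<bar> = G" using h by (simp add: G_def abs_mult)
  have G: "g3*h^3 \<le> G" "- (g3*h^3) \<le> G" by (metis Ga abs_ge_self) (metis Ga abs_ge_minus_self)
  have e0: "muscl_uL (1/2) U 0 + muscl_uR (1/2) U 0 - 2 * w (1/2) = 9/8*r 0 + 9/8*r 1 - 1/8*r (-1) - 1/8*r 2 - 2 * r (1/2)"
    unfolding L0 R0 r_def by (simp add: field_simps power2_eq_square power3_eq_cube)
  show "\<bar>muscl_uL (1/2) U 0 + muscl_uR (1/2) U 0 - 2 * w (1/2)\<bar> \<le> 4*C*h^4"
    using H0 r0 r1 r2 r3 G unfolding e0 H_def[symmetric] G_def[symmetric] abs_le_iff mult.assoc[of _ C]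
    by (intro conjI; elim conjE; linarith)
  have e1: "muscl_uL (1/2) U (-1) + muscl_uR (1/2) U (-1) - 2 * w (-1/2) = 9/8*r 0 + 9/8*r (-1) - 1/8*r 1 - 1/8*r (-2) - 2 * r (-1/2)"
    unfolding L1 R1 r_def by (simp add: field_simps power2_eq_square power3_eq_cube)
  show "\<bar>muscl_uL (1/2) U (-1) + muscl_uR (1/2) U (-1) - 2 * w (-1/2)\<bar> \<le> 4*C*h^4"
    using H0 r0 r1 r2 r3 G unfolding e1 H_def[symmetric] G_def[symmetric] abs_le_iff mult.assoc[of _ C]
    by (intro conjI; elim conjE; linarith)
  have e2: "muscl_uL (1/2) U 0 - w (1/2) = g3*h^3/16 + 3/4*r 0 - 1/8*r (-1) + 3/8*r 1 - r (1/2)"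
    unfolding L0 r_def by (simp add: field_simps power2_eq_square power3_eq_cube)
  show "\<bar>muscl_uL (1/2) U 0 - w (1/2)\<bar> \<le> \<bar>g3\<bar>*h^3/16 + 3*C*h^4"
    using H0 r0 r1 r2 r3 G unfolding e2 H_def[symmetric] G_def[symmetric] abs_le_iff mult.assoc[of _ C]
    by (intro conjI; elim conjE; linarith)
  have e3: "muscl_uR (1/2) U 0 - w (1/2) = - g3*h^3/16 + 3/4*r 1 - 1/8*r 2 + 3/8*r 0 - r (1/2)"
    unfolding R0 r_def by (simp add: field_simps power2_eq_square power3_eq_cube)
  show "\<bar>muscl_uR (1/2) U 0 - w (1/2)\<bar> \<le> \<bar>g3\<bar>*h^3/16 + 3*C*h^4"
    using H0 r0 r1 r2 r3 G unfolding e3 H_def[symmetric] G_def[symmetric] abs_le_iff mult.assoc[of _ C]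
    by (intro conjI; elim conjE; linarith)
  have e4: "muscl_uL (1/2) U (-1) - w (-1/2) = g3*h^3/16 + 3/4*r (-1) - 1/8*r (-2) + 3/8*r 0 - r (-1/2)"
    unfolding L1 r_def by (simp add: field_simps power2_eq_square power3_eq_cube)
  show "\<bar>muscl_uL (1/2) U (-1) - w (-1/2)\<bar> \<le> \<bar>g3\<bar>*h^3/16 + 3*C*h^4"
    using H0 r0 r1 r2 r3 G unfolding e4 H_def[symmetric] G_def[symmetric] abs_le_iff mult.assoc[of _ C]
    by (intro conjI; elim conjE; linarith)
  have e5: "muscl_uR (1/2) U (-1) - w (-1/2) = - g3*h^3/16 + 3/4*r 0 - 1/8*r 1 + 3/8*r (-1) - r (-1/2)"
    unfolding R1 r_def by (simp add: field_simps power2_eq_square power3_eq_cube)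
  show "\<bar>muscl_uR (1/2) U (-1) - w (-1/2)\<bar> \<le> \<bar>g3\<bar>*h^3/16 + 3*C*h^4"
    using H0 r0 r1 r2 r3 G unfolding e5 H_def[symmetric] G_def[symmetric] abs_le_iff mult.assoc[of _ C]
    by (intro conjI; elim conjE; linarith)
  have e6: "(muscl_uR (1/2) U 0 - muscl_uL (1/2) U 0) - (muscl_uR (1/2) U (-1) - muscl_uL (1/2) U (-1)) = - 1/8*r 2 + 1/2*r 1 - 3/4*r 0 + 1/2*r (-1) - 1/8*r (-2)"
    unfolding L0 R0 L1 R1 r_def by (simp add: field_simps power2_eq_square power3_eq_cube)
  show "\<bar>(muscl_uR (1/2) U 0 - muscl_uL (1/2) U 0) - (muscl_uR (1/2) U (-1) - muscl_uL (1/2) U (-1))\<bar> \<le> 8*C*h^4"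
    using H0 r0 r1 r2 r3 G unfolding e6 H_def[symmetric] G_def[symmetric] abs_le_iff mult.assoc[of _ C]
    by (intro conjI; elim conjE; linarith)
  have e7: "muscl_uR (1/2) U (-1) - muscl_uL (1/2) U (-1) = - g3*h^3/8 - 1/8*r 1 + 3/8*r 0 - 3/8*r (-1) + 1/8*r (-2)"
    unfolding L1 R1 r_def by (simp add: field_simps power2_eq_square power3_eq_cube)
  show "\<bar>muscl_uR (1/2) U (-1) - muscl_uL (1/2) U (-1)\<bar> \<le> \<bar>g3\<bar>*h^3/8 + 3*C*h^4"
    using H0 r0 r1 r2 r3 G unfolding e7 H_def[symmetric] G_def[symmetric] abs_le_iff mult.assoc[of _ C]
    by (intro conjI; elim conjE; linarith)
qed

lemma muscl_near:
  assumes "\<bar>U (j-1) - c\<bar> \<le> K" "\<bar>U j - c\<bar> \<le> K" "\<bar>U (j+1) - c\<bar> \<le> K" "\<bar>U (j+2) - c\<bar> \<le> K"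
  shows "\<bar>muscl_uL (1/2) U j - c\<bar> \<le> 2*K" "\<bar>muscl_uR (1/2) U j - c\<bar> \<le> 2*K"
proof -
  have "muscl_uL (1/2) U j - c = 3/4*(U j - c) - 1/8*(U (j-1) - c) + 3/8*(U (j+1) - c)"
    by (simp add: muscl_uL_def field_simps)
  then show "\<bar>muscl_uL (1/2) U j - c\<bar> \<le> 2*K" using assms unfolding abs_le_iff
    by (intro conjI; elim conjE; simp only: right_diff_distrib distrib_left; linarith)
  have "muscl_uR (1/2) U j - c = 3/4*(U (j+1) - c) - 1/8*(U (j+2) - c) + 3/8*(U j - c)"
    by (simp add: muscl_uR_def field_simps)
  then show "\<bar>muscl_uR (1/2) U j - c\<bar> \<le> 2*K" using assms unfolding abs_le_iff
    by (intro conjI; elim conjE; simp only: right_diff_distrib distrib_left; linarith)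
qed

lemma between_near:
  fixes a b c mm K :: real
  assumes "min a b \<le> mm \<and> mm \<le> max a b" "\<bar>a - c\<bar> \<le> K" "\<bar>b - c\<bar> \<le> K"
  shows "\<bar>mm - c\<bar> \<le> K"
  using assms by (auto simp: min_def max_def abs_le_iff split: if_splits)

lemma flux_face:
  fixes f f' :: "real \<Rightarrow> real"
  assumes fT: "\<And>c y. c \<in> {-M..M} \<Longrightarrow> c + y \<in> {-M..M} \<Longrightarrow> \<bar>f (c+y) - (f c + f' c * y)\<bar> \<le> Cf * \<bar>y\<bar>^2"
    and fA: "\<And>c. c \<in> {-M..M} \<Longrightarrow> \<bar>f' c\<bar> \<le> A"
    and LRz: "L \<in> {-M..M}" "R \<in> {-M..M}" "z \<in> {-M..M}"
  shows "\<bar>(f L + f R)/2 - f z\<bar> \<le> A/2*\<bar>L+R-2*z\<bar> + Cf/2*((L-z)^2 + (R-z)^2)"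
proof -
  have 1: "\<bar>f L - (f z + f' z * (L - z))\<bar> \<le> Cf * (L-z)^2" using fT[of z "L - z"] LRz by simp
  have 2: "\<bar>f R - (f z + f' z * (R - z))\<bar> \<le> Cf * (R-z)^2" using fT[of z "R - z"] LRz by simp
  have 3: "\<bar>f' z * (L + R - 2*z)\<bar> \<le> A * \<bar>L+R-2*z\<bar>" unfolding abs_mult
    using fA[OF LRz(3)] by (simp add: mult_right_mono)
  have e: "(f L + f R)/2 - f z = (f' z * (L + R - 2*z))/2 + (f L - (f z + f' z * (L - z)))/2 + (f R - (f z + f' z * (R - z)))/2"
    by (simp add: field_simps)
  show ?thesis unfolding e using 1 2 3 unfolding abs_le_iff
    by (intro conjI; elim conjE; simp only: right_diff_distrib distrib_left add_divide_distrib diff_divide_distrib; linarith)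
qed

lemma diss:
  fixes f' :: "real \<Rightarrow> real"
  assumes fL: "\<bar>f' m0 - f' m1\<bar> \<le> Lf * \<bar>m0 - m1\<bar>" and fA: "\<bar>f' m0\<bar> \<le> A"
  shows "\<bar>1/2 * \<bar>f' m0\<bar> * J0 - 1/2 * \<bar>f' m1\<bar> * J1\<bar> \<le> 1/2 * (A * \<bar>J0 - J1\<bar> + Lf * \<bar>m0 - m1\<bar> * \<bar>J1\<bar>)"
proof -
  have e: "1/2 * \<bar>f' m0\<bar> * J0 - 1/2 * \<bar>f' m1\<bar> * J1 = 1/2 * (\<bar>f' m0\<bar> * (J0 - J1) + (\<bar>f' m0\<bar> - \<bar>f' m1\<bar>) * J1)"
    by (simp add: algebra_simps)
  have 1: "\<bar>\<bar>f' m0\<bar> * (J0 - J1)\<bar> \<le> A * \<bar>J0 - J1\<bar>" unfolding abs_mult using fA by (simp add: mult_right_mono)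
  have "\<bar>\<bar>f' m0\<bar> - \<bar>f' m1\<bar>\<bar> \<le> Lf * \<bar>m0 - m1\<bar>" using fL abs_triangle_ineq3 order_trans by blast
  then have 2: "\<bar>(\<bar>f' m0\<bar> - \<bar>f' m1\<bar>) * J1\<bar> \<le> Lf * \<bar>m0 - m1\<bar> * \<bar>J1\<bar>" unfolding abs_mult by (simp add: mult_right_mono)
  show ?thesis unfolding e abs_mult using 1 2 abs_triangle_ineq[of "\<bar>f' m0\<bar> * (J0 - J1)" "(\<bar>f' m0\<bar> - \<bar>f' m1\<bar>) * J1"]
    by simp
qed

lemma alg:
  fixes h :: real
  assumes h: "h \<noteq> 0"
    and "Vp = Vx + Va*h + Vb/2*h^2 + rVp" "Vm = Vx + Va*(-h) + Vb/2*(-h)^2 + rVm"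
    and "Sp = Sx + Sa*h + Sb/2*h^2 + rSp" "Sm = Sx + Sa*(-h) + Sb/2*(-h)^2 + rSm"
    and "Fp = Fx + (Sx - Vx)*(h/2) + (Sa - Va)/2*(h/2)^2 + (Sb - Vb)/6*(h/2)^3 + rFp"
    and "Fm = Fx + (Sx - Vx)*(-h/2) + (Sa - Va)/2*(-h/2)^2 + (Sb - Vb)/6*(-h/2)^3 + rFm"
    and "E0 = (fL0 + fR0)/2 - Fp" "E1 = (fL1 + fR1)/2 - Fm"
  shows "Vx + (Vp - 2*Vx + Vm)/24 + (((fL0 + fR0)/2 - D0) - ((fL1 + fR1)/2 - D1))/h - (Sx + (Sp - 2*Sx + Sm)/24)
     = (rVp + rVm)/24 - (rSp + rSm)/24 + (rFp - rFm)/h + (E0 - E1)/h - (D0 - D1)/h"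
  unfolding assms(2-9) using h by (simp add: field_simps power2_eq_square power3_eq_cube)

lemma sq_small:
  fixes a b h d :: real
  assumes "\<bar>d\<bar> \<le> a*h^3/16 + b*h^4" "0 \<le> a" "0 \<le> b" "0 < h" "h \<le> 1"
  shows "\<bar>d\<bar> \<le> (a+b)*h^2" "d^2 \<le> (a+b)^2*h^4"
proof -
  have h3: "h^3 \<le> h^2" "h^4 \<le> h^2" using assms by (simp_all add: power_decreasing)
  have "a*h^3 \<le> a*h^2" "0 \<le> a*h^2" using h3 assms mult_left_mono[of "h^3" "h^2" a] by simp_all
  then have "a*h^3/16 \<le> a*h^2" by linarith
  moreover have "b*h^4 \<le> b*h^2" using h3 assms by (simp add: mult_left_mono)
  ultimately show 1: "\<bar>d\<bar> \<le> (a+b)*h^2" using assms(1) by (simp add: distrib_right)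
  have "\<bar>d\<bar>^2 \<le> ((a+b)*h^2)^2" by (rule power_mono[OF 1]) simp
  then show "d^2 \<le> (a+b)^2*h^4" by (simp add: power_mult_distrib power2_abs flip: power_mult)
qed

lemma E_bound:
  fixes E A sm Cf dL dR Cg Kd h :: real
  assumes "\<bar>E\<bar> \<le> A/2 * sm + Cf/2*(dL^2 + dR^2)" "sm \<le> 4*Cg*h^4" "dL^2 \<le> Kd^2*h^4" "dR^2 \<le> Kd^2*h^4"
    "0 \<le> A" "0 \<le> Cf"
  shows "\<bar>E\<bar> \<le> (2*A*Cg + Cf*Kd^2)*h^4"
proof -
  have "A/2 * sm \<le> A/2*(4*Cg*h^4)" using assms by (intro mult_left_mono) auto
  moreover have "Cf/2*(dL^2 + dR^2) \<le> Cf/2*(2*(Kd^2*h^4))" using assms by (intro mult_left_mono) auto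
  ultimately show ?thesis using assms(1) by (simp add: algebra_simps)
qed

lemma D_bound:
  fixes X A J Lf dm J1 Cg C1 Kd h :: real
  assumes "\<bar>X\<bar> \<le> 1/2 * (A * J + Lf * dm * J1)" "J \<le> 8*Cg*h^4" "dm \<le> 8*C1*h" "J1 \<le> Kd*h^3"
    "0 \<le> A" "0 \<le> Lf" "0 \<le> dm" "0 \<le> J1" "0 \<le> C1" "0 < h"
  shows "\<bar>X\<bar> \<le> (4*A*Cg + 4*Lf*C1*Kd)*h^4"
proof -
  have "A * J \<le> A * (8*Cg*h^4)" using assms by (intro mult_left_mono) auto
  moreover have "Lf * dm * J1 \<le> Lf * (8*C1*h) * (Kd*h^3)" using assms
    by (intro mult_mono mult_left_mono) auto
  moreover have "Lf * (8*C1*h) * (Kd*h^3) = 8*(Lf*C1*Kd*h^4)" by (simp add: power4_eq_xxxx power3_eq_cube)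
  moreover have "A * (8*Cg*h^4) = 8*(A*Cg*h^4)" by simp
  moreover have "(4*A*Cg + 4*Lf*C1*Kd)*h^4 = 4*(A*Cg*h^4) + 4*(Lf*C1*Kd*h^4)" by (simp add: algebra_simps)
  moreover have "\<bar>X\<bar> \<le> (A * J)/2 + (Lf * dm * J1)/2" using assms(1) by simp
  ultimately show ?thesis by linarith
qed

lemma final_bound:
  fixes h :: real
  assumes h: "0 < h"
    and "\<bar>rVp\<bar> \<le> CV*h^3" "\<bar>rVm\<bar> \<le> CV*h^3" "\<bar>rSp\<bar> \<le> CS*h^3" "\<bar>rSm\<bar> \<le> CS*h^3"
    and "\<bar>rFp\<bar> \<le> CF*h^4/16" "\<bar>rFm\<bar> \<le> CF*h^4/16" "\<bar>E0\<bar> \<le> KE*h^4" "\<bar>E1\<bar> \<le> KE*h^4" "\<bar>DD\<bar> \<le> KD*h^4"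
  shows "\<bar>(rVp + rVm)/24 - (rSp + rSm)/24 + (rFp - rFm)/h + (E0 - E1)/h - DD/h\<bar>
     \<le> (CV/12 + CS/12 + CF/8 + 2*KE + KD)*h^3"
proof -
  have dv: "\<bar>X/h\<bar> \<le> K*h^3" if "\<bar>X\<bar> \<le> K*h^4" for X K
  proof -
    have e: "K*h^4 = (K*h^3)*h" by (simp add: power4_eq_xxxx power3_eq_cube)
    have "\<bar>X\<bar> \<le> (K*h^3)*h" using that unfolding e .
    then show ?thesis using h by (simp add: abs_divide divide_le_eq)
  qed
  have "\<bar>rFp - rFm\<bar> \<le> (CF*h^4)/8" using assms(6,7) abs_triangle_ineq4[of rFp rFm] by linarith
  then have 1: "\<bar>(rFp - rFm)/h\<bar> \<le> (CF/8)*h^3" by (intro dv) simp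
  have "\<bar>E0 - E1\<bar> \<le> 2*(KE*h^4)" using assms(8,9) abs_triangle_ineq4[of E0 E1] by linarith
  then have 2: "\<bar>(E0 - E1)/h\<bar> \<le> (2*KE)*h^3" by (intro dv) simp
  have 3: "\<bar>DD/h\<bar> \<le> KD*h^3" using assms by (intro dv) auto
  define H where "H = h^3"
  show ?thesis using 1 2 3 assms(2-5) unfolding H_def[symmetric] abs_le_iff
    by (intro conjI; elim conjE; simp only: distrib_right add_divide_distrib diff_divide_distrib; linarith)
qed

lemma main_bound:
  fixes f :: "real \<Rightarrow> real" and m :: "real \<Rightarrow> real \<Rightarrow> real"
    and u s :: "real \<Rightarrow> real \<Rightarrow> real"
  assumes f_smooth: "smooth_fun f"
    and m_between: "\<And>a b. min a b \<le> m a b \<and> m a b \<le> max a b"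
    and u_x_smooth: "\<And>t. smooth_fun (\<lambda>x. u x t)"
    and u_t_smooth: "\<And>t. smooth_fun (\<lambda>x. deriv (\<lambda>\<tau>. u x \<tau>) t)"
    and s_smooth: "\<And>t. smooth_fun (\<lambda>x. s x t)"
    and pde: "\<And>x t. deriv (\<lambda>\<tau>. u x \<tau>) t + deriv (\<lambda>y. f (u y t)) x = s x t"
  shows "\<exists>K. \<forall>h. 0 < h \<and> h \<le> 1/2 \<longrightarrow> \<bar>trunc_err f m (1/2) u s h x t\<bar> \<le> K * h^3"
proof -
  define g where "g = (\<lambda>y. u y t)"
  define V where "V = (\<lambda>y. deriv (\<lambda>\<tau>. u y \<tau>) t)"
  define S where "S = (\<lambda>y. s y t)"
  define F where "F = (\<lambda>y. f (g y))"
  have sg: "smooth_fun g" using u_x_smooth by (simp add: g_def)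
  have sV: "smooth_fun V" using u_t_smooth by (simp add: V_def)
  have sS: "smooth_fun S" using s_smooth by (simp add: S_def)
  have sf': "smooth_fun (deriv f)" using f_smooth unfolding smooth_fun_def
    by (metis funpow_Suc_right comp_apply)
  have D0: "((deriv ^^ 0) h has_real_derivative deriv h y) (at y)" if "smooth_fun h" for h y
    using smooth_D[OF that, of 0] by simp
  have C0: "continuous_on A h" if "smooth_fun h" for h A
    using smooth_C[OF that, of A 0] by simp
  obtain Cg where Cg0: "0 \<le> Cg" and Tg: "\<And>c y. c \<in> {x-2..x+2} \<Longrightarrow> c + y \<in> {x-2..x+2} \<Longrightarrow>
     \<bar>g (c+y) - (\<Sum>m<4. (deriv ^^ m) g c / fact m * y^m)\<bar> \<le> Cg * \<bar>y\<bar>^4"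
    using smooth_taylor[OF sg, of 4 "x-2" "x+2"] by auto
  have sum4: "(\<Sum>m<4. (deriv ^^ m) g x / fact m * y^m) = g x + (deriv ^^ 1) g x * y + (deriv ^^ 2) g x / 2 * y^2 + (deriv ^^ 3) g x / 6 * y^3" for y
    by (simp add: eval_nat_numeral)
  obtain C1 where C10: "0 \<le> C1" and T1': "\<And>c y. c \<in> {x-2..x+2} \<Longrightarrow> c + y \<in> {x-2..x+2} \<Longrightarrow>
     \<bar>g (c+y) - (\<Sum>m<1. (deriv ^^ m) g c / fact m * y^m)\<bar> \<le> C1 * \<bar>y\<bar>^1"
    using smooth_taylor[OF sg, of 1 "x-2" "x+2"] by auto
  have T1: "\<bar>g (c+y) - g c\<bar> \<le> C1 * \<bar>y\<bar>" if "c \<in> {x-2..x+2}" "c + y \<in> {x-2..x+2}" for c y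
    using T1'[OF that] by simp
  obtain CV where CV0: "0 \<le> CV" and TV': "\<And>c y. c \<in> {x-1..x+1} \<Longrightarrow> c + y \<in> {x-1..x+1} \<Longrightarrow>
     \<bar>V (c+y) - (\<Sum>m<3. (deriv ^^ m) V c / fact m * y^m)\<bar> \<le> CV * \<bar>y\<bar>^3"
    using smooth_taylor[OF sV, of 3 "x-1" "x+1"] by auto
  have TV: "\<bar>V (x+y) - (V x + (deriv ^^ 1) V x * y + (deriv ^^ 2) V x / 2 * y^2)\<bar> \<le> CV * \<bar>y\<bar>^3" if "\<bar>y\<bar> \<le> 1" for y
    using TV'[of x y] that by (simp add: eval_nat_numeral abs_le_iff)
  obtain CS where CS0: "0 \<le> CS" and TS': "\<And>c y. c \<in> {x-1..x+1} \<Longrightarrow> c + y \<in> {x-1..x+1} \<Longrightarrow>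
     \<bar>S (c+y) - (\<Sum>m<3. (deriv ^^ m) S c / fact m * y^m)\<bar> \<le> CS * \<bar>y\<bar>^3"
    using smooth_taylor[OF sS, of 3 "x-1" "x+1"] by auto
  have TS: "\<bar>S (x+y) - (S x + (deriv ^^ 1) S x * y + (deriv ^^ 2) S x / 2 * y^2)\<bar> \<le> CS * \<bar>y\<bar>^3" if "\<bar>y\<bar> \<le> 1" for y
    using TS'[of x y] that by (simp add: eval_nat_numeral abs_le_iff)
  have dF: "(F has_real_derivative (S y - V y)) (at y)" for y
  proof -
    have 1: "(g has_real_derivative deriv g y) (at y)" using D0[OF sg] by simp
    have 2: "(f has_real_derivative deriv f (g y)) (at (g y))" using D0[OF f_smooth] by simp
    have 3: "(F has_real_derivative deriv f (g y) * deriv g y) (at y)" unfolding F_def using DERIV_chain2[OF 2 1] .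
    have "V y + deriv F y = S y" using pde[of y t] by (simp add: F_def g_def S_def V_def)
    then have "deriv F y = S y - V y" by linarith
    moreover have "deriv F y = deriv f (g y) * deriv g y" by (rule DERIV_imp_deriv[OF 3])
    ultimately show ?thesis using 3 by simp
  qed
  define d where "d = (\<lambda>k. case k of 0 \<Rightarrow> F | Suc j \<Rightarrow> (\<lambda>y. (deriv ^^ j) S y - (deriv ^^ j) V y))"
  have dd: "(d k has_real_derivative d (Suc k) y) (at y)" for k y
  proof (cases k)
    case 0 then show ?thesis using dF by (simp add: d_def)
  next
    case (Suc j) then show ?thesis unfolding d_def using DERIV_diff[OF smooth_D[OF sS] smooth_D[OF sV]] by simp
  qed
  have dc: "continuous_on {x-1..x+1} (d 4)"
    unfolding d_def using continuous_on_diff[OF smooth_C[OF sS, where m=3] smooth_C[OF sV, where m=3]]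
    by (simp add: eval_nat_numeral)
  obtain CF where CF0: "0 \<le> CF" and TF': "\<And>c y. c \<in> {x-1..x+1} \<Longrightarrow> c + y \<in> {x-1..x+1} \<Longrightarrow>
     \<bar>d 0 (c+y) - (\<Sum>m<4. d m c / fact m * y^m)\<bar> \<le> CF * \<bar>y\<bar>^4"
    using taylor_unif[of 4 d "x-1" "x+1", OF _ dd dc] by auto
  have TF: "\<bar>F (x+y) - (F x + (S x - V x) * y + ((deriv ^^ 1) S x - (deriv ^^ 1) V x) / 2 * y^2
      + ((deriv ^^ 2) S x - (deriv ^^ 2) V x) / 6 * y^3)\<bar> \<le> CF * \<bar>y\<bar>^4" if "\<bar>y\<bar> \<le> 1" for y
    using TF'[of x y] that by (simp add: eval_nat_numeral abs_le_iff d_def)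
  obtain M0 where M00: "0 \<le> M0" and M0: "\<forall>y\<in>{x-2..x+2}. \<bar>g y\<bar> \<le> M0"
    using cont_bound[OF C0[OF sg]] by blast
  define M where "M = 2*M0"
  obtain Cf where Cf0: "0 \<le> Cf" and Tf': "\<And>c y. c \<in> {-M..M} \<Longrightarrow> c + y \<in> {-M..M} \<Longrightarrow>
     \<bar>f (c+y) - (\<Sum>m<2. (deriv ^^ m) f c / fact m * y^m)\<bar> \<le> Cf * \<bar>y\<bar>^2"
    using smooth_taylor[OF f_smooth, of 2 "-M" M] by auto
  have Tf: "\<bar>f (c+y) - (f c + deriv f c * y)\<bar> \<le> Cf * \<bar>y\<bar>^2" if "c \<in> {-M..M}" "c + y \<in> {-M..M}" for c y
    using Tf'[OF that] by (simp add: eval_nat_numeral)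
  obtain Lf where Lf0: "0 \<le> Lf" and Tl': "\<And>c y. c \<in> {-M..M} \<Longrightarrow> c + y \<in> {-M..M} \<Longrightarrow>
     \<bar>deriv f (c+y) - (\<Sum>m<1. (deriv ^^ m) (deriv f) c / fact m * y^m)\<bar> \<le> Lf * \<bar>y\<bar>^1"
    using smooth_taylor[OF sf', of 1 "-M" M] by auto
  have fL: "\<bar>deriv f p - deriv f q\<bar> \<le> Lf * \<bar>p - q\<bar>" if "p \<in> {-M..M}" "q \<in> {-M..M}" for p q
    using Tl'[of q "p - q"] that by simp
  obtain A where A0: "0 \<le> A" and fA: "\<forall>c\<in>{-M..M}. \<bar>deriv f c\<bar> \<le> A"
    using cont_bound[OF C0[OF sf']] by blast
  define g1 where "g1 = (deriv ^^ 1) g x"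
  define g2 where "g2 = (deriv ^^ 2) g x"
  define g3 where "g3 = (deriv ^^ 3) g x"
  define Kd where "Kd = \<bar>g3\<bar> + 3*Cg"
  define KE where "KE = 2*A*Cg + Cf*Kd^2"
  define KD where "KD = 4*A*Cg + 4*Lf*C1*Kd"
  have Kd0: "0 \<le> Kd" using Cg0 by (simp add: Kd_def)
  show ?thesis
  proof (intro exI[of _ "CV/12 + CS/12 + CF/8 + 2*KE + KD"] allI impI)
    fix h :: real assume "0 < h \<and> h \<le> 1/2"
    then have h0: "0 < h" and h1: "h \<le> 1/2" by auto
    define w where "w k = g (x + k*h)" for k
    define U where "U = (\<lambda>k::int. w (of_int k))"
    have kh: "\<bar>k*h\<bar> \<le> 1" if "\<bar>k\<bar> \<le> 2" for k
    proof -
      have "\<bar>k\<bar>*h \<le> 2*(1/2)" using mult_mono[of "\<bar>k\<bar>" 2 h "1/2"] that h0 h1 by auto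
      then show ?thesis using h0 by (simp add: abs_mult)
    qed
    have w0: "w 0 = g x" by (simp add: w_def)
    have wT: "\<bar>w k - (w 0 + g1*(k*h) + g2/2*(k*h)^2 + g3/6*(k*h)^3)\<bar> \<le> Cg*\<bar>k*h\<bar>^4" if "\<bar>k\<bar> \<le> 2" for k
      using Tg[of x "k*h"] kh[OF that] sum4[of "k*h"] unfolding w0
      by (simp add: w_def g1_def g2_def g3_def abs_le_iff)
    note st = stencil[of w g1 h g2 g3 Cg, OF wT h0 Cg0, folded U_def]
    have wM: "\<bar>w k\<bar> \<le> M0" if "\<bar>k\<bar> \<le> 2" for k
      using M0 kh[OF that] by (auto simp: w_def abs_le_iff)
    have w1: "\<bar>w k - g x\<bar> \<le> 2*C1*h" if "\<bar>k\<bar> \<le> 2" for k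
    proof -
      have "\<bar>w k - g x\<bar> \<le> C1 * \<bar>k*h\<bar>" using T1[of x "k*h"] kh[OF that] by (simp add: w_def abs_le_iff)
      also have "\<dots> \<le> C1 * (2*h)" using that h0 C10 by (intro mult_left_mono) (auto simp: abs_mult)
      finally show ?thesis by simp
    qed
    define L0 where "L0 = muscl_uL (1/2) U 0"
    define R0 where "R0 = muscl_uR (1/2) U 0"
    define L1 where "L1 = muscl_uL (1/2) U (-1)"
    define R1 where "R1 = muscl_uR (1/2) U (-1)"
    have nb0: "\<bar>L0 - g x\<bar> \<le> 2*(2*C1*h)" "\<bar>R0 - g x\<bar> \<le> 2*(2*C1*h)"
      using muscl_near[of U 0 "g x" "2*C1*h"] w1 unfolding L0_def R0_def by (simp_all add: U_def)
    have nb1: "\<bar>L1 - g x\<bar> \<le> 2*(2*C1*h)" "\<bar>R1 - g x\<bar> \<le> 2*(2*C1*h)"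
      using muscl_near[of U "-1" "g x" "2*C1*h"] w1 unfolding L1_def R1_def by (simp_all add: U_def)
    have Mb0: "\<bar>L0 - 0\<bar> \<le> 2*M0" "\<bar>R0 - 0\<bar> \<le> 2*M0"
      using muscl_near[of U 0 0 M0] wM unfolding L0_def R0_def by (simp_all add: U_def)
    have Mb1: "\<bar>L1 - 0\<bar> \<le> 2*M0" "\<bar>R1 - 0\<bar> \<le> 2*M0"
      using muscl_near[of U "-1" 0 M0] wM unfolding L1_def R1_def by (simp_all add: U_def)
    have inM: "L0 \<in> {-M..M}" "R0 \<in> {-M..M}" "L1 \<in> {-M..M}" "R1 \<in> {-M..M}"
      "w (1/2) \<in> {-M..M}" "w (-1/2) \<in> {-M..M}"
      using Mb0 Mb1 wM[of "1/2"] wM[of "-1/2"] M00 by (auto simp: M_def abs_le_iff)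
    define m0 where "m0 = m L0 R0"
    define m1 where "m1 = m L1 R1"
    have m0n: "\<bar>m0 - g x\<bar> \<le> 2*(2*C1*h)" unfolding m0_def by (rule between_near[OF m_between nb0])
    have m1n: "\<bar>m1 - g x\<bar> \<le> 2*(2*C1*h)" unfolding m1_def by (rule between_near[OF m_between nb1])
    have m0M: "m0 \<in> {-M..M}" using between_near[OF m_between Mb0] unfolding m0_def M_def by (auto simp: abs_le_iff)
    have m1M: "m1 \<in> {-M..M}" using between_near[OF m_between Mb1] unfolding m1_def M_def by (auto simp: abs_le_iff)
    define E0 where "E0 = (f L0 + f R0)/2 - f (w (1/2))"
    define E1 where "E1 = (f L1 + f R1)/2 - f (w (-1/2))"
    have E0b: "\<bar>E0\<bar> \<le> KE*h^4"
    proof -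
      have 1: "\<bar>E0\<bar> \<le> A/2 * \<bar>L0+R0-2*w (1/2)\<bar> + Cf/2*((L0-w (1/2))^2 + (R0-w (1/2))^2)"
        unfolding E0_def using flux_face[of M f "deriv f" Cf A L0 R0 "w (1/2)"] Tf fA inM by blast
      have 2: "(L0-w (1/2))^2 \<le> Kd^2*h^4" using sq_small(2)[OF st(3)[folded L0_def]] Cg0 h0 h1 unfolding Kd_def by auto
      have 3: "(R0-w (1/2))^2 \<le> Kd^2*h^4" using sq_small(2)[OF st(4)[folded R0_def]] Cg0 h0 h1 unfolding Kd_def by auto
      show ?thesis using E_bound[OF 1 st(1)[folded L0_def R0_def] 2 3 A0 Cf0] unfolding KE_def .
    qed
    have E1b: "\<bar>E1\<bar> \<le> KE*h^4"
    proof -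
      have 1: "\<bar>E1\<bar> \<le> A/2 * \<bar>L1+R1-2*w (-1/2)\<bar> + Cf/2*((L1-w (-1/2))^2 + (R1-w (-1/2))^2)"
        unfolding E1_def using flux_face[of M f "deriv f" Cf A L1 R1 "w (-1/2)"] Tf fA inM by blast
      have 2: "(L1-w (-1/2))^2 \<le> Kd^2*h^4" using sq_small(2)[OF st(5)[folded L1_def]] Cg0 h0 h1 unfolding Kd_def by auto
      have 3: "(R1-w (-1/2))^2 \<le> Kd^2*h^4" using sq_small(2)[OF st(6)[folded R1_def]] Cg0 h0 h1 unfolding Kd_def by auto
      show ?thesis using E_bound[OF 1 st(2)[folded L1_def R1_def] 2 3 A0 Cf0] unfolding KE_def .
    qed
    define D0 where "D0 = 1/2 * \<bar>deriv f m0\<bar> * (R0 - L0)"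
    define D1 where "D1 = 1/2 * \<bar>deriv f m1\<bar> * (R1 - L1)"
    have Db: "\<bar>D0 - D1\<bar> \<le> KD*h^4"
    proof -
      have 1: "\<bar>D0 - D1\<bar> \<le> 1/2 * (A * \<bar>(R0 - L0) - (R1 - L1)\<bar> + Lf * \<bar>m0 - m1\<bar> * \<bar>R1 - L1\<bar>)"
        unfolding D0_def D1_def by (rule diss[OF fL[OF m0M m1M]]) (use fA m0M in auto)
      have 2: "\<bar>m0 - m1\<bar> \<le> 8*C1*h" using m0n m1n unfolding abs_le_iff by (intro conjI; elim conjE; linarith)
      have 3: "\<bar>R1 - L1\<bar> \<le> Kd*h^3"
      proof -
        have a: "\<bar>R1 - L1\<bar> \<le> \<bar>g3\<bar>*h^3/8 + 3*Cg*h^4" using st(8) unfolding L1_def R1_def .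
        have "h^4 \<le> h^3" using h0 h1 by (simp add: power_decreasing)
        then have "3*Cg*h^4 \<le> 3*Cg*h^3" using Cg0 by (simp add: mult_left_mono)
        moreover have "\<bar>g3\<bar>*h^3/8 \<le> \<bar>g3\<bar>*h^3" using h0 by simp
        ultimately show ?thesis using a unfolding Kd_def by (simp add: distrib_right)
      qed
      show ?thesis using D_bound[OF 1 st(7)[folded L0_def R0_def L1_def R1_def] 2 3 A0 Lf0 _ _ C10 h0]
        unfolding KD_def by simp
    qed
    have tr: "trunc_err f m (1/2) u s h x t = V x + (V (x+h) - 2*V x + V (x + -h))/24
        + (((f L0 + f R0)/2 - D0) - ((f L1 + f R1)/2 - D1))/h - (S x + (S (x+h) - 2*S x + S (x + -h))/24)"
      unfolding trunc_err_def num_flux_def Let_def L0_def R0_def L1_def R1_def D0_def D1_def m0_def m1_def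
        U_def w_def g_def V_def S_def
      by simp
    have wp: "w (1/2) = g (x + h/2)" "w (-1/2) = g (x + -h/2)" by (simp_all add: w_def)
    define V1 where "V1 = (deriv ^^ 1) V x"
    define V2 where "V2 = (deriv ^^ 2) V x"
    define S1 where "S1 = (deriv ^^ 1) S x"
    define S2 where "S2 = (deriv ^^ 2) S x"
    define rVp where "rVp = V (x+h) - (V x + V1*h + V2/2*h^2)"
    define rVm where "rVm = V (x + -h) - (V x + V1*(-h) + V2/2*(-h)^2)"
    define rSp where "rSp = S (x+h) - (S x + S1*h + S2/2*h^2)"
    define rSm where "rSm = S (x + -h) - (S x + S1*(-h) + S2/2*(-h)^2)"
    define rFp where "rFp = F (x + h/2) - (F x + (S x - V x)*(h/2) + (S1 - V1)/2*(h/2)^2 + (S2 - V2)/6*(h/2)^3)"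
    define rFm where "rFm = F (x + -h/2) - (F x + (S x - V x)*(-h/2) + (S1 - V1)/2*(-h/2)^2 + (S2 - V2)/6*(-h/2)^3)"
    have Fw: "f (w (1/2)) = F (x + h/2)" "f (w (-1/2)) = F (x + -h/2)" using wp by (simp_all add: F_def)
    have Fw': "f (w (- (1/2))) = F (x - h/2)" using Fw(2) by simp
    have eq: "trunc_err f m (1/2) u s h x t
      = (rVp + rVm)/24 - (rSp + rSm)/24 + (rFp - rFm)/h + (E0 - E1)/h - (D0 - D1)/h"
      unfolding tr
      by (rule alg[where Vx="V x" and Sx="S x" and Fx="F x" and Va=V1 and Vb=V2 and Sa=S1 and Sb=S2
          and Fp="F (x + h/2)" and Fm="F (x + -h/2)"])
        (use h0 in \<open>simp_all add: rVp_def rVm_def rSp_def rSm_def rFp_def rFm_def E0_def E1_def Fw Fw'\<close>)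
    have h1': "\<bar>h\<bar> \<le> 1" "\<bar>-h\<bar> \<le> 1" "\<bar>h/2\<bar> \<le> 1" "\<bar>-h/2\<bar> \<le> 1" using h0 h1 by auto
    have b1: "\<bar>rVp\<bar> \<le> CV*h^3" "\<bar>rVm\<bar> \<le> CV*h^3"
      using TV[OF h1'(1)] TV[OF h1'(2)] h0 unfolding rVp_def rVm_def V1_def V2_def by simp_all
    have b2: "\<bar>rSp\<bar> \<le> CS*h^3" "\<bar>rSm\<bar> \<le> CS*h^3"
      using TS[OF h1'(1)] TS[OF h1'(2)] h0 unfolding rSp_def rSm_def S1_def S2_def by simp_all
    have b3: "\<bar>rFp\<bar> \<le> CF*h^4/16" "\<bar>rFm\<bar> \<le> CF*h^4/16"
      using TF[OF h1'(3)] TF[OF h1'(4)] h0 unfolding rFp_def rFm_def S1_def S2_def V1_def V2_def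
      by (simp_all add: power_divide)
    show "\<bar>trunc_err f m (1/2) u s h x t\<bar> \<le> (CV/12 + CS/12 + CF/8 + 2*KE + KD) * h^3"
      unfolding eq by (rule final_bound[OF h0 b1 b2 b3 E0b E1b Db])
  qed
qed

theorem mainTheorem2:
  fixes f :: "real \<Rightarrow> real" and m :: "real \<Rightarrow> real \<Rightarrow> real"
    and u s :: "real \<Rightarrow> real \<Rightarrow> real"
  assumes f_smooth: "smooth_fun f"
    and m_between: "\<And>a b. min a b \<le> m a b \<and> m a b \<le> max a b"
    and u_x_smooth: "\<And>t. smooth_fun (\<lambda>x. u x t)"
    and u_t_diff: "\<And>x t. (\<lambda>\<tau>. u x \<tau>) differentiable (at t)"
    and u_t_smooth: "\<And>t. smooth_fun (\<lambda>x. deriv (\<lambda>\<tau>. u x \<tau>) t)"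
    and s_smooth: "\<And>t. smooth_fun (\<lambda>x. s x t)"
    and pde: "\<And>x t. deriv (\<lambda>\<tau>. u x \<tau>) t + deriv (\<lambda>y. f (u y t)) x = s x t"
  shows "\<forall>x t. (\<lambda>h. trunc_err f m (1/2) u s h x t) \<in> O[at_right 0](\<lambda>h. h ^ 3)"
proof (intro allI)
  fix x t
  obtain K where K: "\<forall>h. 0 < h \<and> h \<le> 1/2 \<longrightarrow> \<bar>trunc_err f m (1/2) u s h x t\<bar> \<le> K * h^3"
    using main_bound[OF f_smooth m_between u_x_smooth u_t_smooth s_smooth pde] by blast
  show "(\<lambda>h. trunc_err f m (1/2) u s h x t) \<in> O[at_right 0](\<lambda>h. h ^ 3)"
  proof (rule bigoI[where c=K])
    show "eventually (\<lambda>h. norm (trunc_err f m (1/2) u s h x t) \<le> K * norm (h^3)) (at_right 0)"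
      by (rule eventually_at_rightI[of 0 "1/2"]) (use K in auto)
  qed
qed

end
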